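(* Let $\mathcal{D}$ be a dyadic grid and $j\in\mathbb{Z}_+$. There exists $C>0$, independent of $j$ and $f$, such that for every $f\in L^1(\mathbb{R}^d)$, \[ \sup_{\lambda>0}\lambda\,\big|\{x\in\mathbb{R}^d: S_j^{\mathcal{D}}f(x)>\lambda\}\big|\le C(1+j)\|f\|_{L^1}, \] where $\big(S_j^{\mathcal{D}}f(x)\big)^2=\sum_{Q\in\mathcal{D}}\sum_{P\in\mathcal{D},\,P\subset Q,\,\ell P=2^{-j}\ell Q}\frac{\langle f,h_P\rangle^2}{|P|}\mathbf{1}_P(x)$. In particular $\|S_j^{\mathcal{D}}\|_{L^1\to L^{1,\infty}}$ grows at most polynomially in $j$.
   Context: A dyadic grid is the standard grid $\bigcup_j\{2^{-j}([0,1)^d+m):m\in\mathbb{Z}^d\}$ or a translate of it by $\omega\in(\{0,1\}^d)^{\mathbb{Z}}$. For a dyadic cube $P=P_1\times\dots\times P_d$, the Haar functions are $h_P^\epsilon=\prod_ih_{P_i}^{\epsilon_i}$, $\epsilon\in\{0,1\}^d\setminus\{0\}^d$, where $h_I^0=|I|^{-1/2}\mathbf{1}_I$, $h_I^1=|I|^{-1/2}(\mathbf{1}_{I^-}-\mathbf{1}_{I^+})$; $\langle f,h_P\rangle^2:=\sum_\epsilon\langle f,h_P^\epsilon\rangle^2$. *)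

theory Defs
  imports "HOL-Analysis.Analysis"
begin

text \<open>Dimension d = CARD('n); points of R^d are of type real^'n.
  A dyadic grid is parametrised by omega :: int => ('n => bool), i.e. omega in ({0,1}^d)^Z
  (True = 1). The standard grid is omega = (\<lambda>_ _. False).\<close>

definition sidelen :: "int \<Rightarrow> real" where
  "sidelen k = 2 powr (- real_of_int k)"

definition grid_shift :: "(int \<Rightarrow> 'n \<Rightarrow> bool) \<Rightarrow> int \<Rightarrow> 'n \<Rightarrow> real" where
  "grid_shift \<omega> k i = (\<Sum>n. 2 powr (- real_of_int (k + 1 + int n)) *
                           (if \<omega> (k + 1 + int n) i then 1 else 0))"

definition cube_corner :: "(int \<Rightarrow> 'n \<Rightarrow> bool) \<Rightarrow> int \<Rightarrow> ('n \<Rightarrow> int) \<Rightarrow> 'n \<Rightarrow> real" where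
  "cube_corner \<omega> k m i = sidelen k * real_of_int (m i) + grid_shift \<omega> k i"

definition dcube :: "(int \<Rightarrow> 'n \<Rightarrow> bool) \<Rightarrow> int \<Rightarrow> ('n \<Rightarrow> int) \<Rightarrow> (real^'n) set" where
  "dcube \<omega> k m = {x. \<forall>i. cube_corner \<omega> k m i \<le> x $ i \<and> x $ i < cube_corner \<omega> k m i + sidelen k}"

definition cube_vol :: "int \<Rightarrow> real" where
  "cube_vol k = sidelen k ^ CARD('n)" for dummy :: "'n itself"

definition haar1 :: "real \<Rightarrow> real \<Rightarrow> bool \<Rightarrow> real \<Rightarrow> real" where
  "haar1 a l e t = l powr (-1/2) *
     (if e then indicator {a..<a + l/2} t - indicator {a + l/2..<a + l} t
      else indicator {a..<a + l} t)"

definition haar :: "(int \<Rightarrow> 'n::finite \<Rightarrow> bool) \<Rightarrow> int \<Rightarrow> ('n \<Rightarrow> int) \<Rightarrow> ('n \<Rightarrow> bool) \<Rightarrow> real^'n \<Rightarrow> real" where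
  "haar \<omega> k m \<epsilon> x = (\<Prod>i\<in>UNIV. haar1 (cube_corner \<omega> k m i) (sidelen k) (\<epsilon> i) (x $ i))"

definition haar_coeff_sq :: "(int \<Rightarrow> 'n::finite \<Rightarrow> bool) \<Rightarrow> (real^'n \<Rightarrow> real) \<Rightarrow> int \<Rightarrow> ('n \<Rightarrow> int) \<Rightarrow> real" where
  "haar_coeff_sq \<omega> f k m =
     (\<Sum>\<epsilon> \<in> {\<epsilon>::'n \<Rightarrow> bool. \<epsilon> \<noteq> (\<lambda>_. False)}.
        (integral\<^sup>L lebesgue (\<lambda>x. f x * haar \<omega> k m \<epsilon> x))\<^sup>2)"

definition esqrt :: "ennreal \<Rightarrow> ennreal" where
  "esqrt s = (if s = top then top else ennreal (sqrt (enn2real s)))"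

text \<open>(S_j f(x))^2 = sum_{Q in D} sum_{P in D, P subset Q, l(P) = 2^(-j) l(Q)} <f,h_P>^2/|P| 1_P(x).
  Cubes are indexed by (generation, integer index); Q = (k, m), P = (k', m').\<close>
definition Sj :: "(int \<Rightarrow> 'n::finite \<Rightarrow> bool) \<Rightarrow> nat \<Rightarrow> (real^'n \<Rightarrow> real) \<Rightarrow> real^'n \<Rightarrow> ennreal" where
  "Sj \<omega> j f x = esqrt (\<Sum>\<^sub>\<infinity> (Q, P) \<in>
       {((k, m), (k', m')). dcube \<omega> k' m' \<subseteq> dcube \<omega> k m \<and>
                            sidelen k' = 2 powr (- real j) * sidelen k}.
       ennreal (haar_coeff_sq \<omega> f (fst P) (snd P) / cube_vol TYPE('n) (fst P))
         * indicator (dcube \<omega> (fst P) (snd P)) x)"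

end

theory Submission
  imports Defs "HOL-Analysis.Analysis"
begin


lemma sidelen_pos[simp]: "sidelen k > 0" by (simp add: sidelen_def)

lemma sidelen_succ: "sidelen (k+1) = sidelen k / 2"
proof -
  have "sidelen (k+1) = 2 powr (- real_of_int k + (-1))" by (simp add: sidelen_def)
  also have "\<dots> = sidelen k * 2 powr (-1)" unfolding sidelen_def by (rule powr_add)
  finally show ?thesis by (simp add: powr_minus_divide)
qed

lemma sidelen_inj: "sidelen k = sidelen k' \<Longrightarrow> k = k'"
  unfolding sidelen_def by (subst (asm) powr_inj) auto

lemma pow2_split: "2 powr (- real_of_int (k + 1 + int n)) = 2 powr (- real_of_int (k+1)) * (1/2::real)^n"
proof -
  have "2 powr (- real_of_int (k + 1 + int n)) = 2 powr (- real_of_int (k+1) + (- real n))" by simp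
  also have "\<dots> = 2 powr (- real_of_int (k+1)) * 2 powr (- real n)" by (rule powr_add)
  also have "2 powr (- real n) = (1/2::real)^n"
    by (simp add: powr_minus powr_realpow power_one_over inverse_eq_divide)
  finally show ?thesis .
qed

lemma gs_summable: "summable (\<lambda>n. 2 powr (- real_of_int (k + 1 + int n)) * (if \<omega> (k + 1 + int n) i then 1 else 0::real))"
proof (rule summable_comparison_test')
  show "summable (\<lambda>n. 2 powr (- real_of_int (k+1)) * (1/2::real)^n)"
    by (intro summable_mult summable_geometric) auto
  fix n :: nat
  show "norm (2 powr (- real_of_int (k + 1 + int n)) * (if \<omega> (k + 1 + int n) i then 1 else 0::real))
     \<le> 2 powr (- real_of_int (k+1)) * (1/2::real)^n" unfolding pow2_split by auto
qed

lemma gs_rec: "grid_shift \<omega> k i = sidelen (k+1) * of_bool (\<omega> (k+1) i) + grid_shift \<omega> (k+1) i"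
proof -
  let ?a = "(\<lambda>n. 2 powr (- real_of_int (k + 1 + int n)) * (if \<omega> (k + 1 + int n) i then 1 else 0::real))"
  have "(\<Sum>n. ?a (Suc n)) = suminf ?a - ?a 0"
    by (rule suminf_split_head[OF gs_summable])
  moreover have "(\<lambda>n. ?a (Suc n)) = (\<lambda>n. 2 powr (- real_of_int (k + 1 + 1 + int n)) * (if \<omega> (k + 1 + 1 + int n) i then 1 else 0::real))"
    by (rule ext) (simp add: add_ac)
  ultimately show ?thesis unfolding grid_shift_def sidelen_def by auto
qed

definition idx :: "(int \<Rightarrow> 'n \<Rightarrow> bool) \<Rightarrow> int \<Rightarrow> real^'n \<Rightarrow> 'n \<Rightarrow> int" where
  "idx \<omega> k x = (\<lambda>i. \<lfloor>(x$i - grid_shift \<omega> k i) / sidelen k\<rfloor>)"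

lemma mem_dcube: "x \<in> dcube \<omega> k m \<longleftrightarrow> idx \<omega> k x = m"
proof -
  have *: "(cube_corner \<omega> k m i \<le> x $ i \<and> x $ i < cube_corner \<omega> k m i + sidelen k) \<longleftrightarrow>
      \<lfloor>(x$i - grid_shift \<omega> k i) / sidelen k\<rfloor> = m i" for i
  proof -
    have l: "sidelen k > 0" by simp
    have "\<lfloor>(x$i - grid_shift \<omega> k i) / sidelen k\<rfloor> = m i \<longleftrightarrow>
       of_int (m i) \<le> (x$i - grid_shift \<omega> k i) / sidelen k \<and> (x$i - grid_shift \<omega> k i) / sidelen k < of_int (m i) + 1"
      by (rule floor_eq_iff)
    also have "\<dots> \<longleftrightarrow> sidelen k * of_int (m i) \<le> x$i - grid_shift \<omega> k i \<and> x$i - grid_shift \<omega> k i < sidelen k * (of_int (m i) + 1)"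
      using l by (simp add: pos_le_divide_eq pos_divide_less_eq mult.commute)
    finally show ?thesis unfolding cube_corner_def by (auto simp: algebra_simps)
  qed
  show ?thesis unfolding dcube_def idx_def using * by (auto simp: fun_eq_iff)
qed

lemma idx_succ: "idx \<omega> k x i = (idx \<omega> (k+1) x i - of_bool (\<omega> (k+1) i)) div 2"
proof -
  let ?l = "sidelen (k+1)" and ?w = "of_bool (\<omega> (k+1) i) :: int"
  have l: "?l > 0" by simp
  have "(x$i - grid_shift \<omega> k i) / sidelen k = ((x$i - grid_shift \<omega> (k+1) i)/?l - of_int ?w) / real_of_int 2"
  proof -
    have e: "sidelen k = 2 * ?l" using sidelen_succ[of k] by simp
    have alg: "\<And>L w s X::real. L > 0 \<Longrightarrow> (X - (L*w + s))/(2*L) = ((X-s)/L - w)/2"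
      by (simp add: field_simps)
    show ?thesis unfolding gs_rec[of \<omega> k] e using alg[OF l] by simp
  qed
  hence "idx \<omega> k x i = \<lfloor>(x$i - grid_shift \<omega> (k+1) i)/?l - of_int ?w\<rfloor> div 2"
    unfolding idx_def by (simp only: floor_divide_real_eq_div[of 2] order.refl zero_le_numeral)
  thus ?thesis unfolding idx_def by simp
qed

lemma idx_le_aux: "idx \<omega> (k + int n) x = idx \<omega> (k + int n) y \<Longrightarrow> idx \<omega> k x = idx \<omega> k y"
proof (induction n)
  case 0 thus ?case by simp
next
  case (Suc n)
  have "idx \<omega> (k + int n) x = idx \<omega> (k + int n) y"
  proof
    fix i
    have e: "k + int (Suc n) = k + int n + 1" by simp
    show "idx \<omega> (k + int n) x i = idx \<omega> (k + int n) y i"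
      using Suc.prems unfolding idx_succ[of \<omega> "k + int n" x i] idx_succ[of \<omega> "k + int n" y i] e by simp
  qed
  thus ?case by (rule Suc.IH)
qed

lemma idx_le: "k' \<le> k \<Longrightarrow> idx \<omega> k x = idx \<omega> k y \<Longrightarrow> idx \<omega> k' x = idx \<omega> k' y"
  using idx_le_aux[of \<omega> k' "nat (k - k')" x y] by simp

definition ch :: "(int \<Rightarrow> 'n \<Rightarrow> bool) \<Rightarrow> int \<Rightarrow> ('n \<Rightarrow> int) \<Rightarrow> ('n \<Rightarrow> bool) \<Rightarrow> 'n \<Rightarrow> int" where
  "ch \<omega> k m \<delta> = (\<lambda>i. 2 * m i + of_bool (\<omega> (k+1) i) + of_bool (\<delta> i))"

lemma corner_ch: "cube_corner \<omega> (k+1) (ch \<omega> k m \<delta>) i = cube_corner \<omega> k m i + of_bool (\<delta> i) * (sidelen k / 2)"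
  unfolding cube_corner_def ch_def gs_rec[of \<omega> k] sidelen_succ by (simp add: algebra_simps)

lemma idx_ch: "idx \<omega> (k+1) x = ch \<omega> k m \<delta> \<Longrightarrow> idx \<omega> k x = m"
proof
  fix i assume "idx \<omega> (k+1) x = ch \<omega> k m \<delta>"
  hence "idx \<omega> (k+1) x i = 2 * m i + of_bool (\<omega> (k+1) i) + of_bool (\<delta> i)" by (simp add: ch_def)
  thus "idx \<omega> k x i = m i" unfolding idx_succ[of \<omega> k x i] by simp
qed

definition pd :: "(int \<Rightarrow> 'n \<Rightarrow> bool) \<Rightarrow> int \<Rightarrow> ('n \<Rightarrow> int) \<Rightarrow> 'n \<Rightarrow> int" where
  "pd \<omega> k m' = (\<lambda>i. (m' i - of_bool (\<omega> (k+1) i)) div 2)"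
definition pdd :: "(int \<Rightarrow> 'n \<Rightarrow> bool) \<Rightarrow> int \<Rightarrow> ('n \<Rightarrow> int) \<Rightarrow> 'n \<Rightarrow> bool" where
  "pdd \<omega> k m' = (\<lambda>i. (m' i - of_bool (\<omega> (k+1) i)) mod 2 = 1)"

lemma ch_pd: "ch \<omega> k (pd \<omega> k m') (pdd \<omega> k m') = m'"
proof
  fix i
  have "m' i - of_bool (\<omega> (k+1) i) = 2 * ((m' i - of_bool (\<omega> (k+1) i)) div 2) + (m' i - of_bool (\<omega> (k+1) i)) mod 2"
    by simp
  moreover have "(m' i - of_bool (\<omega> (k+1) i)) mod 2 = of_bool ((m' i - of_bool (\<omega> (k+1) i)) mod 2 = 1)"
    by auto
  ultimately show "ch \<omega> k (pd \<omega> k m') (pdd \<omega> k m') i = m' i"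
    unfolding ch_def pd_def pdd_def by linarith
qed

lemma pd_ch: "pd \<omega> k (ch \<omega> k m \<delta>) = m" and pdd_ch: "pdd \<omega> k (ch \<omega> k m \<delta>) = \<delta>"
  unfolding pd_def pdd_def ch_def by (auto simp: fun_eq_iff)

lemma idx_pd: "idx \<omega> k x = pd \<omega> k (idx \<omega> (k+1) x)"
  unfolding pd_def by (auto simp: fun_eq_iff idx_succ[of \<omega> k x])


definition chi :: "('n \<Rightarrow> bool) \<Rightarrow> ('n::finite \<Rightarrow> bool) \<Rightarrow> real" where
  "chi \<epsilon> \<delta> = (\<Prod>i\<in>UNIV. if \<epsilon> i \<and> \<delta> i then -1 else 1)"

definition hf :: "real \<Rightarrow> real \<Rightarrow> bool \<Rightarrow> real set" where
  "hf a l b = (if b then {a + l/2..<a+l} else {a..<a+l/2})"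

lemma haar1_expand: "l > 0 \<Longrightarrow> haar1 a l e t = l powr (-1/2) *
   (\<Sum>b\<in>UNIV. (if e \<and> b then -1 else 1) * indicator (hf a l b) t)"
  unfolding haar1_def hf_def UNIV_bool by (auto simp: indicator_def)

lemma prod_sum_UNIV:
  fixes g :: "'n::finite \<Rightarrow> bool \<Rightarrow> real"
  shows "(\<Prod>i\<in>UNIV. \<Sum>b\<in>UNIV. g i b) = (\<Sum>\<delta>\<in>UNIV. \<Prod>i\<in>UNIV. g i (\<delta> i))"
  using prod_sum_PiE[of "UNIV::'n set" "\<lambda>_. UNIV::bool set" g] by (simp add: PiE_UNIV_domain)

lemma prod_indicator:
  fixes S :: "'n::finite \<Rightarrow> real set"
  shows "(\<Prod>i\<in>UNIV. indicator (S i) (x$i) :: real) = indicator {x. \<forall>i. x$i \<in> S i} x"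
proof (cases "\<forall>i. x$i \<in> S i")
  case True thus ?thesis by (simp add: indicator_def)
next
  case False
  then obtain i where "x$i \<notin> S i" by auto
  hence "(\<Prod>i\<in>UNIV. indicator (S i) (x$i) :: real) = 0"
    using \<open>x$i \<notin> S i\<close> by (subst prod_zero_iff) (auto intro!: exI[of _ i])
  thus ?thesis using False by (simp add: indicator_def)
qed

lemma haar_expand:
  "haar \<omega> k m \<epsilon> x = (sidelen k powr (-1/2)) ^ CARD('n) *
     (\<Sum>\<delta>\<in>UNIV. chi \<epsilon> \<delta> * indicator (dcube \<omega> (k+1) (ch \<omega> k m \<delta>)) x)"
  for \<omega> :: "int \<Rightarrow> 'n::finite \<Rightarrow> bool"
proof -
  let ?c = "sidelen k powr (-1/2)"
  let ?g = "\<lambda>i b. (if \<epsilon> i \<and> b then -1 else 1) * indicator (hf (cube_corner \<omega> k m i) (sidelen k) b) (x$i) :: real"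
  have "haar \<omega> k m \<epsilon> x = (\<Prod>i\<in>UNIV. ?c * (\<Sum>b\<in>UNIV. ?g i b))"
    unfolding haar_def by (intro prod.cong refl haar1_expand) simp
  also have "\<dots> = ?c ^ CARD('n) * (\<Prod>i\<in>UNIV. \<Sum>b\<in>UNIV. ?g i b)"
    by (simp add: prod.distrib)
  also have "(\<Prod>i\<in>UNIV. \<Sum>b\<in>UNIV. ?g i b) = (\<Sum>\<delta>\<in>UNIV. \<Prod>i\<in>UNIV. ?g i (\<delta> i))"
    by (rule prod_sum_UNIV)
  also have "\<dots> = (\<Sum>\<delta>\<in>UNIV. chi \<epsilon> \<delta> * indicator (dcube \<omega> (k+1) (ch \<omega> k m \<delta>)) x)"
  proof (rule sum.cong[OF refl])
    fix \<delta> :: "'n \<Rightarrow> bool"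
    have "(\<Prod>i\<in>UNIV. ?g i (\<delta> i)) = chi \<epsilon> \<delta> * (\<Prod>i\<in>UNIV. indicator (hf (cube_corner \<omega> k m i) (sidelen k) (\<delta> i)) (x$i))"
      unfolding chi_def by (simp add: prod.distrib)
    also have "(\<Prod>i\<in>UNIV. indicator (hf (cube_corner \<omega> k m i) (sidelen k) (\<delta> i)) (x$i) :: real)
       = indicator {x. \<forall>i. x$i \<in> hf (cube_corner \<omega> k m i) (sidelen k) (\<delta> i)} x"
      by (rule prod_indicator)
    also have "{x. \<forall>i. x$i \<in> hf (cube_corner \<omega> k m i) (sidelen k) (\<delta> i)} = dcube \<omega> (k+1) (ch \<omega> k m \<delta>)"
      unfolding dcube_def corner_ch sidelen_succ hf_def by (auto simp: of_bool_def split: if_splits)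
    finally show "(\<Prod>i\<in>UNIV. ?g i (\<delta> i)) = chi \<epsilon> \<delta> * indicator (dcube \<omega> (k+1) (ch \<omega> k m \<delta>)) x" .
  qed
  finally show ?thesis .
qed

lemma haar0: "haar \<omega> k m (\<lambda>_. False) x = (sidelen k powr (-1/2)) ^ CARD('n) * indicator (dcube \<omega> k m) x"
  for \<omega> :: "int \<Rightarrow> 'n::finite \<Rightarrow> bool"
proof -
  have "haar \<omega> k m (\<lambda>_. False) x = (\<Prod>i\<in>UNIV. sidelen k powr (-1/2) * indicator {cube_corner \<omega> k m i..<cube_corner \<omega> k m i + sidelen k} (x$i))"
    unfolding haar_def haar1_def by simp
  also have "\<dots> = (sidelen k powr (-1/2)) ^ CARD('n) * indicator (dcube \<omega> k m) x"
    by (simp add: prod.distrib prod_indicator dcube_def)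
  finally show ?thesis .
qed

lemma chi_orth: "(\<Sum>\<epsilon>\<in>UNIV. chi \<epsilon> \<delta> * chi \<epsilon> \<delta>') = (if \<delta> = \<delta>' then 2 ^ CARD('n) else 0)"
  for \<delta> \<delta>' :: "'n::finite \<Rightarrow> bool"
proof -
  let ?g = "\<lambda>i b. (if b \<and> \<delta> i then -1 else 1) * (if b \<and> \<delta>' i then -1 else (1::real))"
  have "(\<Sum>\<epsilon>\<in>UNIV. chi \<epsilon> \<delta> * chi \<epsilon> \<delta>') = (\<Sum>\<epsilon>\<in>UNIV. \<Prod>i\<in>UNIV. ?g i (\<epsilon> i))"
    unfolding chi_def by (simp add: prod.distrib)
  also have "\<dots> = (\<Prod>i\<in>UNIV. \<Sum>b\<in>UNIV. ?g i b)" by (rule prod_sum_UNIV[symmetric])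
  also have "\<dots> = (\<Prod>i\<in>UNIV. if \<delta> i = \<delta>' i then 2 else 0)"
    by (intro prod.cong refl) (auto simp: UNIV_bool)
  also have "\<dots> = (if \<delta> = \<delta>' then 2 ^ CARD('n) else 0)"
  proof (cases "\<delta> = \<delta>'")
    case True thus ?thesis by simp
  next
    case False
    then obtain i where "\<delta> i \<noteq> \<delta>' i" by auto
    hence "(\<Prod>i\<in>UNIV. if \<delta> i = \<delta>' i then 2 else 0::real) = 0"
      by (subst prod_zero_iff) (auto intro!: bexI[of _ i])
    thus ?thesis using False by simp
  qed
  finally show ?thesis .
qed


lemma dcube_borel[measurable]: "dcube \<omega> k m \<in> sets borel"
  unfolding dcube_def by measurable

lemma dcube_leb[measurable]: "dcube \<omega> k m \<in> sets lebesgue"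
  by (rule sets_completionI_sets) simp

lemma vol_pos[simp]: "cube_vol TYPE('n::finite) k > 0"
  by (simp add: cube_vol_def)

lemma vol_succ: "cube_vol TYPE('n::finite) (k+1) = cube_vol TYPE('n) k / 2 ^ CARD('n)"
  by (simp add: cube_vol_def sidelen_succ power_divide)

lemma csq: "((sidelen k powr (-1/2)) ^ CARD('n::finite))\<^sup>2 = 1 / cube_vol TYPE('n) k"
proof -
  have "(sidelen k powr (-1/2))\<^sup>2 = sidelen k powr (real 2 * (-1/2))"
    using sidelen_pos[of k] by (intro powr_power) linarith
  also have "\<dots> = 1 / sidelen k" using sidelen_pos[of k] by (simp add: powr_minus_divide less_imp_le)
  finally have "(sidelen k powr (-1/2))\<^sup>2 = 1 / sidelen k" .
  thus ?thesis unfolding cube_vol_def by (simp add: power_mult[symmetric] mult.commute[of _ 2] power_mult power_one_over)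
qed

definition J :: "(int \<Rightarrow> 'n::finite \<Rightarrow> bool) \<Rightarrow> (real^'n \<Rightarrow> real) \<Rightarrow> int \<Rightarrow> ('n \<Rightarrow> int) \<Rightarrow> real" where
  "J \<omega> f k m = (\<integral>x. f x * indicator (dcube \<omega> k m) x \<partial>lebesgue)"

definition E :: "(int \<Rightarrow> 'n::finite \<Rightarrow> bool) \<Rightarrow> (real^'n \<Rightarrow> real) \<Rightarrow> int \<Rightarrow> ('n \<Rightarrow> int) \<Rightarrow> real" where
  "E \<omega> f k m = (J \<omega> f k m)\<^sup>2 / cube_vol TYPE('n) k"

lemma inner_haar:
  fixes \<omega> :: "int \<Rightarrow> 'n::finite \<Rightarrow> bool"
  assumes f: "integrable lebesgue f"
  shows "(\<integral>x. f x * haar \<omega> k m \<epsilon> x \<partial>lebesgue) =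
    (sidelen k powr (-1/2)) ^ CARD('n) * (\<Sum>\<delta>\<in>UNIV. chi \<epsilon> \<delta> * J \<omega> f (k+1) (ch \<omega> k m \<delta>))"
proof -
  have "(\<integral>x. f x * haar \<omega> k m \<epsilon> x \<partial>lebesgue) =
     (\<integral>x. (sidelen k powr (-1/2)) ^ CARD('n) * (\<Sum>\<delta>\<in>UNIV. chi \<epsilon> \<delta> * (f x * indicator (dcube \<omega> (k+1) (ch \<omega> k m \<delta>)) x)) \<partial>lebesgue)"
    unfolding haar_expand by (intro Bochner_Integration.integral_cong refl) (simp only: sum_distrib_left mult_ac)
  also have "\<dots> = (sidelen k powr (-1/2)) ^ CARD('n) * (\<Sum>\<delta>\<in>UNIV. chi \<epsilon> \<delta> * J \<omega> f (k+1) (ch \<omega> k m \<delta>))"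
  proof -
    have "(\<integral>x. (\<Sum>\<delta>\<in>UNIV. chi \<epsilon> \<delta> * (f x * indicator (dcube \<omega> (k+1) (ch \<omega> k m \<delta>)) x)) \<partial>lebesgue)
       = (\<Sum>\<delta>\<in>UNIV. (\<integral>x. chi \<epsilon> \<delta> * (f x * indicator (dcube \<omega> (k+1) (ch \<omega> k m \<delta>)) x) \<partial>lebesgue))"
      by (rule Bochner_Integration.integral_sum) (auto intro!: integrable_mult_right integrable_real_mult_indicator f)
    also have "\<dots> = (\<Sum>\<delta>\<in>UNIV. chi \<epsilon> \<delta> * J \<omega> f (k+1) (ch \<omega> k m \<delta>))"
      unfolding J_def by (simp only: integral_mult_right_zero)
    finally show ?thesis by (simp only: integral_mult_right_zero)
  qed
  finally show ?thesis .
qed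

lemma inner_haar0:
  fixes \<omega> :: "int \<Rightarrow> 'n::finite \<Rightarrow> bool"
  shows "(\<integral>x. f x * haar \<omega> k m (\<lambda>_. False) x \<partial>lebesgue) = (sidelen k powr (-1/2)) ^ CARD('n) * J \<omega> f k m"
proof -
  have "(\<integral>x. f x * haar \<omega> k m (\<lambda>_. False) x \<partial>lebesgue) = (\<integral>x. (sidelen k powr (-1/2)) ^ CARD('n) * (f x * indicator (dcube \<omega> k m) x) \<partial>lebesgue)"
    unfolding haar0 by (simp only: mult_ac)
  thus ?thesis unfolding J_def by (simp only: integral_mult_right_zero)
qed

lemma sq_sum_chi:
  fixes I :: "('n::finite \<Rightarrow> bool) \<Rightarrow> real"
  shows "(\<Sum>\<epsilon>\<in>UNIV. (\<Sum>\<delta>\<in>UNIV. chi \<epsilon> \<delta> * I \<delta>)\<^sup>2) = 2 ^ CARD('n) * (\<Sum>\<delta>\<in>UNIV. (I \<delta>)\<^sup>2)"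
proof -
  have "(\<Sum>\<epsilon>\<in>UNIV. (\<Sum>\<delta>\<in>UNIV. chi \<epsilon> \<delta> * I \<delta>)\<^sup>2) =
        (\<Sum>\<epsilon>\<in>UNIV. \<Sum>\<delta>\<in>UNIV. \<Sum>\<delta>'\<in>UNIV. I \<delta> * I \<delta>' * (chi \<epsilon> \<delta> * chi \<epsilon> \<delta>'))"
    unfolding power2_eq_square sum_product by (simp only: mult_ac)
  also have "\<dots> = (\<Sum>\<delta>\<in>UNIV. \<Sum>\<epsilon>\<in>UNIV. \<Sum>\<delta>'\<in>UNIV. I \<delta> * I \<delta>' * (chi \<epsilon> \<delta> * chi \<epsilon> \<delta>'))"
    by (rule sum.swap)
  also have "\<dots> = (\<Sum>\<delta>\<in>UNIV. \<Sum>\<delta>'\<in>UNIV. \<Sum>\<epsilon>\<in>UNIV. I \<delta> * I \<delta>' * (chi \<epsilon> \<delta> * chi \<epsilon> \<delta>'))"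
    by (rule sum.cong[OF refl], rule sum.swap)
  also have "\<dots> = (\<Sum>\<delta>\<in>UNIV. \<Sum>\<delta>'\<in>UNIV. I \<delta> * I \<delta>' * (\<Sum>\<epsilon>\<in>UNIV. chi \<epsilon> \<delta> * chi \<epsilon> \<delta>'))"
    by (simp only: sum_distrib_left)
  also have "\<dots> = (\<Sum>\<delta>\<in>UNIV. \<Sum>\<delta>'\<in>UNIV. if \<delta> = \<delta>' then I \<delta> * I \<delta> * 2 ^ CARD('n) else 0)"
    unfolding chi_orth by (intro sum.cong refl) auto
  also have "\<dots> = (\<Sum>\<delta>\<in>UNIV. I \<delta> * I \<delta> * 2 ^ CARD('n))"
    by (intro sum.cong refl) (simp add: sum.delta)
  also have "\<dots> = 2 ^ CARD('n) * (\<Sum>\<delta>\<in>UNIV. (I \<delta>)\<^sup>2)"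
    by (simp add: power2_eq_square sum_distrib_left mult_ac)
  finally show ?thesis .
qed

lemma coeff_id:
  fixes \<omega> :: "int \<Rightarrow> 'n::finite \<Rightarrow> bool"
  assumes f: "integrable lebesgue f"
  shows "haar_coeff_sq \<omega> f k m + E \<omega> f k m = (\<Sum>\<delta>\<in>UNIV. E \<omega> f (k+1) (ch \<omega> k m \<delta>))"
proof -
  let ?c = "(sidelen k powr (-1/2)) ^ CARD('n)"
  let ?h = "\<lambda>\<epsilon>. (\<integral>x. f x * haar \<omega> k m \<epsilon> x \<partial>lebesgue)\<^sup>2"
  have "haar_coeff_sq \<omega> f k m + E \<omega> f k m = (\<Sum>\<epsilon>\<in>UNIV. ?h \<epsilon>)"
  proof -
    have "(\<Sum>\<epsilon>\<in>UNIV. ?h \<epsilon>) = ?h (\<lambda>_. False) + (\<Sum>\<epsilon>\<in>UNIV - {\<lambda>_. False}. ?h \<epsilon>)"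
      by (rule sum.remove) auto
    moreover have "UNIV - {\<lambda>_. False} = {\<epsilon>::'n\<Rightarrow>bool. \<epsilon> \<noteq> (\<lambda>_. False)}" by auto
    moreover have "?h (\<lambda>_. False) = E \<omega> f k m"
      unfolding inner_haar0 E_def power_mult_distrib csq by simp
    ultimately show ?thesis unfolding haar_coeff_sq_def by simp
  qed
  also have "\<dots> = ?c\<^sup>2 * (\<Sum>\<epsilon>\<in>UNIV. (\<Sum>\<delta>\<in>UNIV. chi \<epsilon> \<delta> * J \<omega> f (k+1) (ch \<omega> k m \<delta>))\<^sup>2)"
    unfolding inner_haar[OF f] power_mult_distrib by (rule sum_distrib_left[symmetric])
  also have "\<dots> = (\<Sum>\<delta>\<in>UNIV. E \<omega> f (k+1) (ch \<omega> k m \<delta>))"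
    unfolding sq_sum_chi csq E_def vol_succ by (auto simp: sum_divide_distrib sum_distrib_left mult_ac intro!: sum.cong)
  finally show ?thesis .
qed


lemma ennreal_infsum_SUP:
  fixes g :: "'a::countable \<Rightarrow> ennreal"
  shows "infsum g UNIV = (SUP n. \<Sum>x\<in>from_nat ` {..<n}. g x)"
proof -
  have eq: "infsum g UNIV = (SUP F\<in>{F. finite F \<and> F \<subseteq> UNIV}. sum g F)"
    by (rule nonneg_infsum_complete) simp
  show ?thesis unfolding eq
  proof (rule antisym)
    show "(SUP F\<in>{F. finite F \<and> F \<subseteq> UNIV}. sum g F) \<le> (SUP n. \<Sum>x\<in>from_nat ` {..<n}. g x)"
    proof (rule SUP_least)
      fix F :: "'a set" assume "F \<in> {F. finite F \<and> F \<subseteq> UNIV}"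
      hence fin: "finite F" by auto
      define n where "n = Suc (Max (insert 0 (to_nat ` F)))"
      have "F \<subseteq> from_nat ` {..<n}"
      proof
        fix x assume "x \<in> F"
        hence "to_nat x < n" unfolding n_def using fin by (simp add: le_imp_less_Suc)
        thus "x \<in> from_nat ` {..<n}" by (intro image_eqI[of _ _ "to_nat x"]) auto
      qed
      hence "sum g F \<le> (\<Sum>x\<in>from_nat ` {..<n}. g x)" by (intro sum_mono2) auto
      also have "\<dots> \<le> (SUP n. \<Sum>x\<in>from_nat ` {..<n}. g x)" by (rule SUP_upper) simp
      finally show "sum g F \<le> (SUP n. \<Sum>x\<in>from_nat ` {..<n}. g x)" .
    qed
  next
    show "(SUP n. \<Sum>x\<in>from_nat ` {..<n}. g x) \<le> (SUP F\<in>{F. finite F \<and> F \<subseteq> UNIV}. sum g F)"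
      by (rule SUP_least, rule SUP_upper) auto
  qed
qed

lemma measurable_infsum[measurable (raw)]:
  fixes g :: "'a::countable \<Rightarrow> 'b \<Rightarrow> ennreal"
  assumes [measurable]: "\<And>m. g m \<in> borel_measurable M"
  shows "(\<lambda>x. infsum (\<lambda>m. g m x) UNIV) \<in> borel_measurable M"
  unfolding ennreal_infsum_SUP by measurable

lemma nn_integral_infsum:
  fixes g :: "'a::countable \<Rightarrow> 'b \<Rightarrow> ennreal"
  assumes [measurable]: "\<And>m. g m \<in> borel_measurable M"
  shows "(\<integral>\<^sup>+x. infsum (\<lambda>m. g m x) UNIV \<partial>M) = infsum (\<lambda>m. \<integral>\<^sup>+x. g m x \<partial>M) UNIV"
proof -
  have "(\<integral>\<^sup>+x. infsum (\<lambda>m. g m x) UNIV \<partial>M) = (\<integral>\<^sup>+x. (SUP n. \<Sum>m\<in>from_nat ` {..<n}. g m x) \<partial>M)"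
    unfolding ennreal_infsum_SUP ..
  also have "\<dots> = (SUP n. \<integral>\<^sup>+x. (\<Sum>m\<in>from_nat ` {..<n}. g m x) \<partial>M)"
  proof (rule nn_integral_monotone_convergence_SUP)
    show "incseq (\<lambda>n x. \<Sum>m\<in>from_nat ` {..<n}. g m x)"
      by (intro incseq_SucI le_funI sum_mono2) auto
  qed measurable
  also have "\<dots> = (SUP n. \<Sum>m\<in>from_nat ` {..<n}. \<integral>\<^sup>+x. g m x \<partial>M)"
    by (intro SUP_cong refl nn_integral_sum) auto
  also have "\<dots> = infsum (\<lambda>m. \<integral>\<^sup>+x. g m x \<partial>M) UNIV"
    unfolding ennreal_infsum_SUP ..
  finally show ?thesis .
qed

lemma infsum_single_ennreal:
  fixes g :: "'a \<Rightarrow> ennreal"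
  assumes "\<And>m. m \<noteq> m0 \<Longrightarrow> g m = 0"
  shows "infsum g UNIV = g m0"
proof -
  have "infsum g UNIV = infsum g {m0}"
    by (rule infsum_cong_neutral) (use assms in auto)
  thus ?thesis by simp
qed

lemma infsum_sum_ennreal:
  fixes g :: "'d \<Rightarrow> 'a \<Rightarrow> ennreal"
  assumes "finite D"
  shows "infsum (\<lambda>m. \<Sum>\<delta>\<in>D. g \<delta> m) A = (\<Sum>\<delta>\<in>D. infsum (g \<delta>) A)"
  using assms
proof (induction D rule: finite_induct)
  case empty thus ?case by simp
next
  case (insert d D)
  have "infsum (\<lambda>m. \<Sum>\<delta>\<in>insert d D. g \<delta> m) A = infsum (\<lambda>m. g d m + (\<Sum>\<delta>\<in>D. g \<delta> m)) A"
    using insert by simp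
  also have "\<dots> = infsum (g d) A + infsum (\<lambda>m. \<Sum>\<delta>\<in>D. g \<delta> m) A"
    by (rule infsum_add; rule nonneg_summable_on_complete; simp)
  finally show ?case using insert by simp
qed

lemma infsum_le_ennreal:
  fixes g :: "'a \<Rightarrow> ennreal"
  assumes "\<And>F. finite F \<Longrightarrow> sum g F \<le> B"
  shows "infsum g UNIV \<le> B"
proof -
  have "infsum g UNIV = (SUP F\<in>{F. finite F \<and> F \<subseteq> UNIV}. sum g F)"
    by (rule nonneg_infsum_complete) simp
  also have "\<dots> \<le> B" by (rule SUP_least) (use assms in auto)
  finally show ?thesis .
qed

lemma sum_le_infsum_ennreal:
  fixes g :: "'a \<Rightarrow> ennreal"
  assumes "finite F"
  shows "sum g F \<le> infsum g UNIV"
proof -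
  have "infsum g UNIV = (SUP F\<in>{F. finite F \<and> F \<subseteq> UNIV}. sum g F)"
    by (rule nonneg_infsum_complete) simp
  thus ?thesis using assms by (auto intro!: SUP_upper)
qed


definition pt :: "(int \<Rightarrow> 'n \<Rightarrow> bool) \<Rightarrow> int \<Rightarrow> ('n \<Rightarrow> int) \<Rightarrow> real^'n" where
  "pt \<omega> k m = (\<chi> i. cube_corner \<omega> k m i)"

lemma pt_in: "pt \<omega> k m \<in> dcube \<omega> k m"
  unfolding pt_def dcube_def by simp

lemma idx_pt[simp]: "idx \<omega> k (pt \<omega> k m) = m"
  using pt_in mem_dcube by blast

lemma dcube_sub_cbox: "dcube \<omega> k m \<subseteq> cbox (pt \<omega> k m) (pt \<omega> k m + (\<chi> i. sidelen k))"
  unfolding dcube_def pt_def by (auto simp: mem_box_cart less_imp_le)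

lemma emeasure_dcube: "emeasure lebesgue (dcube \<omega> k m) \<le> ennreal (cube_vol TYPE('n) k)"
  for \<omega> :: "int \<Rightarrow> 'n::finite \<Rightarrow> bool"
proof -
  let ?a = "pt \<omega> k m" and ?b = "pt \<omega> k m + (\<chi> i. sidelen k)"
  have "emeasure lebesgue (dcube \<omega> k m) \<le> emeasure lebesgue (cbox ?a ?b)"
    by (rule emeasure_mono[OF dcube_sub_cbox]) simp
  also have "\<dots> = emeasure lborel (cbox ?a ?b)" by simp
  also have "\<dots> = ennreal (measure lborel (cbox ?a ?b))"
    using emeasure_lborel_cbox_finite[of ?a ?b] by (intro emeasure_eq_ennreal_measure) auto
  also have "measure lborel (cbox ?a ?b) = (\<Prod>i\<in>UNIV. ?b$i - ?a$i)"
    by (rule content_cbox_cart) (use pt_in[of \<omega> k m] dcube_sub_cbox[of \<omega> k m] in blast)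
  also have "\<dots> = cube_vol TYPE('n) k" by (simp add: cube_vol_def)
  finally show ?thesis .
qed

lemma dcube_ch_sub: "dcube \<omega> (k+1) (ch \<omega> k m \<delta>) \<subseteq> dcube \<omega> k m"
  using idx_ch mem_dcube by blast

lemma dcube_pd_sub: "dcube \<omega> (k+1) m' \<subseteq> dcube \<omega> k (pd \<omega> k m')"
proof
  fix x assume "x \<in> dcube \<omega> (k+1) m'"
  hence "idx \<omega> (k+1) x = m'" by (simp add: mem_dcube)
  thus "x \<in> dcube \<omega> k (pd \<omega> k m')" using idx_pd[of \<omega> k x] by (simp add: mem_dcube)
qed

lemma vol_mono: "k \<le> k' \<Longrightarrow> cube_vol TYPE('n::finite) k' \<le> cube_vol TYPE('n) k"
  unfolding cube_vol_def sidelen_def by (intro power_mono) auto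


locale sq =
  fixes \<omega> :: "int \<Rightarrow> 'n::finite \<Rightarrow> bool" and f :: "real^'n \<Rightarrow> real" and lam :: real
  assumes f: "integrable lebesgue f" and lam: "lam > 0"
begin

definition A where "A k m = (\<integral>x. \<bar>f x\<bar> * indicator (dcube \<omega> k m) x \<partial>lebesgue)"
definition nf where "nf = (\<integral>x. \<bar>f x\<bar> \<partial>lebesgue)"
definition stopped where "stopped k m \<longleftrightarrow> lam * cube_vol TYPE('n) k < A k m"
definition goodm where "goodm k m \<longleftrightarrow> (\<forall>k'\<le>k. \<not> stopped k' (idx \<omega> k' (pt \<omega> k m)))"
definition maxst where "maxst k m \<longleftrightarrow> stopped k m \<and> (\<forall>k'<k. \<not> stopped k' (idx \<omega> k' (pt \<omega> k m)))"
definition Om where "Om = {x. \<exists>k. stopped k (idx \<omega> k x)}"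

lemma vol_ge0[simp]: "0 \<le> cube_vol TYPE('n) k"
  using vol_pos less_imp_le by blast

lemma int_abs_ind: "integrable lebesgue (\<lambda>x. \<bar>f x\<bar> * indicator (dcube \<omega> k m) x)"
  by (intro integrable_real_mult_indicator integrable_abs f) simp

lemma int_ind: "integrable lebesgue (\<lambda>x. f x * indicator (dcube \<omega> k m) x)"
  by (intro integrable_real_mult_indicator f) simp

lemma A_nonneg: "A k m \<ge> 0"
  unfolding A_def by (intro integral_nonneg_AE) auto

lemma nf_nonneg: "nf \<ge> 0"
  unfolding nf_def by (intro integral_nonneg_AE) auto

lemma A_le_nf: "A k m \<le> nf"
  unfolding A_def nf_def
  by (intro integral_mono int_abs_ind integrable_abs f) (auto simp: indicator_def)

lemma A_ennreal: "ennreal (A k m) = (\<integral>\<^sup>+x. ennreal \<bar>f x\<bar> * indicator (dcube \<omega> k m) x \<partial>lebesgue)"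
proof -
  have "(\<integral>\<^sup>+x. ennreal (\<bar>f x\<bar> * indicator (dcube \<omega> k m) x) \<partial>lebesgue) = A k m"
    unfolding A_def by (intro nn_integral_eq_integral int_abs_ind) auto
  moreover have "(\<integral>\<^sup>+x. ennreal (\<bar>f x\<bar> * indicator (dcube \<omega> k m) x) \<partial>lebesgue)
     = (\<integral>\<^sup>+x. ennreal \<bar>f x\<bar> * indicator (dcube \<omega> k m) x \<partial>lebesgue)"
    by (intro nn_integral_cong) (simp split: split_indicator)
  ultimately show ?thesis by simp
qed

lemma nf_ennreal: "ennreal nf = (\<integral>\<^sup>+x. ennreal \<bar>f x\<bar> \<partial>lebesgue)"
  unfolding nf_def by (intro nn_integral_eq_integral[symmetric] integrable_abs f) auto

lemma A_sub: "dcube \<omega> k' m' \<subseteq> dcube \<omega> k m \<Longrightarrow> A k' m' \<le> A k m"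
  unfolding A_def by (intro integral_mono int_abs_ind) (auto simp: indicator_def)

lemma J_le: "\<bar>J \<omega> f k m\<bar> \<le> A k m"
  unfolding J_def A_def
  by (rule integral_abs_bound_integral[OF int_ind int_abs_ind]) (simp add: abs_mult)

lemma E_nonneg: "E \<omega> f k m \<ge> 0"
  unfolding E_def using vol_pos[of k] by (intro divide_nonneg_pos) auto

lemma E_le: "E \<omega> f k m \<le> (A k m)\<^sup>2 / cube_vol TYPE('n) k"
proof -
  have "(J \<omega> f k m)\<^sup>2 \<le> (A k m)\<^sup>2"
    using J_le[of k m] by (metis abs_le_square_iff abs_of_nonneg A_nonneg)
  thus ?thesis unfolding E_def using vol_pos[of k] by (intro divide_right_mono) auto
qed

lemma coeff_nonneg: "haar_coeff_sq \<omega> f k m \<ge> 0"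
  unfolding haar_coeff_sq_def by (intro sum_nonneg) auto

lemma idx_pt_le: "idx \<omega> k x = m \<Longrightarrow> k' \<le> k \<Longrightarrow> idx \<omega> k' (pt \<omega> k m) = idx \<omega> k' x"
  by (rule idx_le[of k' k]) auto

lemma goodx: "idx \<omega> k x = m \<Longrightarrow> goodm k m \<longleftrightarrow> (\<forall>k'\<le>k. \<not> stopped k' (idx \<omega> k' x))"
  unfolding goodm_def using idx_pt_le by auto

lemma maxstx: "idx \<omega> k x = m \<Longrightarrow> maxst k m \<longleftrightarrow> stopped k m \<and> (\<forall>k'<k. \<not> stopped k' (idx \<omega> k' x))"
  unfolding maxst_def using idx_pt_le by auto

lemma goodm_self: "goodm k m \<Longrightarrow> \<not> stopped k m"
  unfolding goodm_def by (metis order_refl idx_pt)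

lemma idx_pt_succ: "idx \<omega> k (pt \<omega> (k+1) m') = pd \<omega> k m'"
  using idx_pd[of \<omega> k "pt \<omega> (k+1) m'"] by simp

lemma goodm_succ: "goodm (k+1) m' \<longleftrightarrow> goodm k (pd \<omega> k m') \<and> \<not> stopped (k+1) m'"
proof -
  let ?x = "pt \<omega> (k+1) m'"
  have "goodm (k+1) m' \<longleftrightarrow> (\<forall>k'\<le>k+1. \<not> stopped k' (idx \<omega> k' ?x))" by (rule goodx) simp
  also have "\<dots> \<longleftrightarrow> (\<forall>k'\<le>k. \<not> stopped k' (idx \<omega> k' ?x)) \<and> \<not> stopped (k+1) m'"
    by (auto simp: le_less zless_add1_eq)
  also have "(\<forall>k'\<le>k. \<not> stopped k' (idx \<omega> k' ?x)) \<longleftrightarrow> goodm k (pd \<omega> k m')"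
    by (rule goodx[symmetric]) (rule idx_pt_succ)
  finally show ?thesis .
qed

lemma maxst_succ: "maxst (k+1) m' \<longleftrightarrow> goodm k (pd \<omega> k m') \<and> stopped (k+1) m'"
proof -
  let ?x = "pt \<omega> (k+1) m'"
  have "maxst (k+1) m' \<longleftrightarrow> stopped (k+1) m' \<and> (\<forall>k'<k+1. \<not> stopped k' (idx \<omega> k' ?x))" by (rule maxstx) simp
  also have "(\<forall>k'<k+1. \<not> stopped k' (idx \<omega> k' ?x)) \<longleftrightarrow> (\<forall>k'\<le>k. \<not> stopped k' (idx \<omega> k' ?x))"
    by auto
  also have "(\<forall>k'\<le>k. \<not> stopped k' (idx \<omega> k' ?x)) \<longleftrightarrow> goodm k (pd \<omega> k m')"
    by (rule goodx[symmetric]) (rule idx_pt_succ)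
  finally show ?thesis by auto
qed

definition K0 :: int where "K0 = - int (nat \<lceil>nf / lam\<rceil>)"

lemma no_stop: "k \<le> K0 \<Longrightarrow> \<not> stopped k m"
proof -
  assume k: "k \<le> K0"
  define n where "n = nat \<lceil>nf / lam\<rceil>"
  have "nf / lam \<le> real n" unfolding n_def by linarith
  also have "real n \<le> 2 ^ n" using of_nat_less_two_power[of n, where ?'a=real] by simp
  also have "(2::real) ^ n = sidelen K0"
  proof -
    have "K0 = - int n" unfolding K0_def n_def ..
    hence "sidelen K0 = 2 powr (real n)" unfolding sidelen_def by simp
    also have "\<dots> = 2 ^ n" by (rule powr_realpow) simp
    finally show ?thesis by simp
  qed
  also have "sidelen K0 \<le> sidelen K0 ^ CARD('n)"
  proof -
    have "(1::real) \<le> 2 ^ n" by simp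
    hence "1 \<le> sidelen K0" using \<open>(2::real) ^ n = sidelen K0\<close> by simp
    moreover have "1 \<le> CARD('n)" by (simp add: Suc_le_eq)
    ultimately show ?thesis using power_increasing[of 1 "CARD('n)" "sidelen K0"] by simp
  qed
  also have "\<dots> = cube_vol TYPE('n) K0" by (simp add: cube_vol_def)
  also have "\<dots> \<le> cube_vol TYPE('n) k" by (rule vol_mono[OF k])
  finally have "nf \<le> lam * cube_vol TYPE('n) k" using lam by (simp add: pos_divide_le_eq mult.commute)
  thus ?thesis unfolding stopped_def using A_le_nf[of k m] by linarith
qed

lemma stopped_gt: "stopped k m \<Longrightarrow> K0 < k"
  using no_stop[of k m] by (meson not_le)

lemma maxst_exists: assumes "x \<in> Om" shows "\<exists>k. maxst k (idx \<omega> k x)"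
proof -
  from assms obtain k1 where k1: "stopped k1 (idx \<omega> k1 x)" unfolding Om_def by auto
  let ?P = "\<lambda>n::nat. stopped (K0 + int n) (idx \<omega> (K0 + int n) x)"
  have "?P (nat (k1 - K0))" using k1 stopped_gt[OF k1] by simp
  hence P0: "?P (LEAST n. ?P n)" by (rule LeastI)
  define k where "k = K0 + int (LEAST n. ?P n)"
  have "maxst k (idx \<omega> k x)"
  proof (subst maxstx[OF refl], intro conjI allI impI)
    show "stopped k (idx \<omega> k x)" using P0 unfolding k_def .
    fix k' assume "k' < k"
    show "\<not> stopped k' (idx \<omega> k' x)"
    proof (cases "k' \<le> K0")
      case True thus ?thesis using no_stop by blast
    next
      case False
      hence "nat (k' - K0) < (LEAST n. ?P n)" using \<open>k' < k\<close> unfolding k_def by linarith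
      hence "\<not> ?P (nat (k' - K0))" by (rule not_less_Least)
      thus ?thesis using False by simp
    qed
  qed
  thus ?thesis ..
qed

lemma maxst_unique: "maxst k (idx \<omega> k x) \<Longrightarrow> maxst k' (idx \<omega> k' x) \<Longrightarrow> k = k'"
proof (rule ccontr)
  assume a: "maxst k (idx \<omega> k x)" "maxst k' (idx \<omega> k' x)" "k \<noteq> k'"
  have s: "stopped k (idx \<omega> k x)" "stopped k' (idx \<omega> k' x)" using a(1,2) unfolding maxst_def by auto
  have n1: "\<forall>k''<k. \<not> stopped k'' (idx \<omega> k'' x)" using a(1) maxstx[OF refl, of k x] by auto
  have n2: "\<forall>k''<k'. \<not> stopped k'' (idx \<omega> k'' x)" using a(2) maxstx[OF refl, of k' x] by auto
  show False using a(3) s n1 n2 by (cases "k < k'") auto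
qed

lemma good_no_maxst: "goodm k (idx \<omega> k x) \<Longrightarrow> k' \<le> k \<Longrightarrow> \<not> maxst k' (idx \<omega> k' x)"
  using goodx[OF refl, of k x] maxstx[OF refl, of k' x] by auto

lemma notOm_good: "x \<notin> Om \<Longrightarrow> goodm k (idx \<omega> k x)"
  using goodx[OF refl, of k x] unfolding Om_def by auto

lemma Om_sets: "Om \<in> sets lebesgue"
proof -
  have "Om = (\<Union>z\<in>{z. stopped (fst z) (snd z)}. dcube \<omega> (fst z) (snd z))"
    unfolding Om_def by (auto simp: mem_dcube)
  also have "\<dots> \<in> sets lebesgue" by (rule sets.countable_UN) (auto intro: dcube_leb)
  finally show ?thesis .
qed

end


lemma infsum_cmult_ennreal:
  fixes g :: "'a::countable \<Rightarrow> ennreal"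
  shows "infsum (\<lambda>z. c * g z) UNIV = c * infsum g UNIV"
  unfolding ennreal_infsum_SUP sum_distrib_left[symmetric]
  by (rule SUP_mult_left_ennreal[symmetric])

lemma CLm:
  fixes h :: "('n::finite \<Rightarrow> int) \<Rightarrow> ennreal"
  shows "infsum (\<lambda>m. h m * indicator (dcube \<omega> k m) x) UNIV = h (idx \<omega> k x)"
proof -
  have "infsum (\<lambda>m. h m * indicator (dcube \<omega> k m) x) UNIV = h (idx \<omega> k x) * indicator (dcube \<omega> k (idx \<omega> k x)) x"
    by (rule infsum_single_ennreal) (simp add: mem_dcube indicator_def)
  thus ?thesis by (simp add: mem_dcube indicator_def)
qed

lemma CL:
  fixes h :: "int \<Rightarrow> ('n::finite \<Rightarrow> int) \<Rightarrow> ennreal"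
  shows "infsum (\<lambda>z. h (fst z) (snd z) * indicator (dcube \<omega> (fst z) (snd z)) x) UNIV
       = infsum (\<lambda>k. h k (idx \<omega> k x)) UNIV"
proof -
  let ?g = "\<lambda>z. h (fst z) (snd z) * indicator (dcube \<omega> (fst z) (snd z)) x"
  have "infsum ?g UNIV = infsum ?g (range (\<lambda>k. (k, idx \<omega> k x)))"
    by (rule infsum_cong_neutral) (auto simp: mem_dcube indicator_def)
  also have "\<dots> = infsum (?g \<circ> (\<lambda>k. (k, idx \<omega> k x))) UNIV"
    by (rule infsum_reindex) (auto intro: inj_onI)
  also have "\<dots> = infsum (\<lambda>k. h k (idx \<omega> k x)) UNIV"
    by (rule infsum_cong) (simp add: mem_dcube indicator_def)
  finally show ?thesis .
qed

lemma RI: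
  fixes \<phi> :: "('n::finite \<Rightarrow> int) \<Rightarrow> ennreal"
  shows "infsum \<phi> UNIV = (\<Sum>\<delta>\<in>UNIV. infsum (\<lambda>m. \<phi> (ch \<omega> k m \<delta>)) UNIV)"
proof -
  have "infsum \<phi> UNIV = infsum (\<lambda>m'. \<Sum>\<delta>\<in>UNIV. if pdd \<omega> k m' = \<delta> then \<phi> m' else 0) UNIV"
    by (rule infsum_cong) simp
  also have "\<dots> = (\<Sum>\<delta>\<in>UNIV. infsum (\<lambda>m'. if pdd \<omega> k m' = \<delta> then \<phi> m' else 0) UNIV)"
    by (rule infsum_sum_ennreal) simp
  also have "\<dots> = (\<Sum>\<delta>\<in>UNIV. infsum (\<lambda>m. \<phi> (ch \<omega> k m \<delta>)) UNIV)"
  proof (rule sum.cong[OF refl])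
    fix \<delta> :: "'n \<Rightarrow> bool"
    have r: "range (\<lambda>m. ch \<omega> k m \<delta>) = {m'. pdd \<omega> k m' = \<delta>}"
    proof (intro equalityI subsetI)
      fix m' assume "m' \<in> range (\<lambda>m. ch \<omega> k m \<delta>)"
      thus "m' \<in> {m'. pdd \<omega> k m' = \<delta>}" by (auto simp: pdd_ch)
    next
      fix m' assume "m' \<in> {m'. pdd \<omega> k m' = \<delta>}"
      hence "ch \<omega> k (pd \<omega> k m') \<delta> = m'" using ch_pd[of \<omega> k m'] by simp
      thus "m' \<in> range (\<lambda>m. ch \<omega> k m \<delta>)" by (metis rangeI)
    qed
    have "infsum (\<lambda>m'. if pdd \<omega> k m' = \<delta> then \<phi> m' else 0) UNIV = infsum \<phi> (range (\<lambda>m. ch \<omega> k m \<delta>))"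
      unfolding r by (rule infsum_cong_neutral) auto
    also have "\<dots> = infsum (\<phi> \<circ> (\<lambda>m. ch \<omega> k m \<delta>)) UNIV"
      by (rule infsum_reindex) (metis (mono_tags, lifting) inj_onI pd_ch)
    finally show "infsum (\<lambda>m'. if pdd \<omega> k m' = \<delta> then \<phi> m' else 0) UNIV = infsum (\<lambda>m. \<phi> (ch \<omega> k m \<delta>)) UNIV"
      by (simp add: o_def)
  qed
  finally show ?thesis .
qed


context sq
begin

lemma fm[measurable]: "f \<in> borel_measurable lebesgue"
  using f by (rule borel_measurable_integrable)

lemma A_ennreal_c: "c \<ge> 0 \<Longrightarrow> ennreal (c * A k m) = (\<integral>\<^sup>+x. ennreal (c * \<bar>f x\<bar>) * indicator (dcube \<omega> k m) x \<partial>lebesgue)"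
proof -
  assume c: "c \<ge> 0"
  have "(\<integral>\<^sup>+x. ennreal (c * (\<bar>f x\<bar> * indicator (dcube \<omega> k m) x)) \<partial>lebesgue) = (\<integral>x. c * (\<bar>f x\<bar> * indicator (dcube \<omega> k m) x) \<partial>lebesgue)"
    using c by (intro nn_integral_eq_integral integrable_mult_right int_abs_ind) auto
  also have "\<dots> = c * A k m" unfolding A_def by simp
  finally have 1: "(\<integral>\<^sup>+x. ennreal (c * (\<bar>f x\<bar> * indicator (dcube \<omega> k m) x)) \<partial>lebesgue) = c * A k m" .
  moreover have "(\<integral>\<^sup>+x. ennreal (c * (\<bar>f x\<bar> * indicator (dcube \<omega> k m) x)) \<partial>lebesgue)
     = (\<integral>\<^sup>+x. ennreal (c * \<bar>f x\<bar>) * indicator (dcube \<omega> k m) x \<partial>lebesgue)"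
    by (intro nn_integral_cong) (simp split: split_indicator)
  ultimately show ?thesis by simp
qed

lemma nf_ennreal_c: "c \<ge> 0 \<Longrightarrow> ennreal (c * nf) = (\<integral>\<^sup>+x. ennreal (c * \<bar>f x\<bar>) \<partial>lebesgue)"
proof -
  assume c: "c \<ge> 0"
  have "(\<integral>\<^sup>+x. ennreal (c * \<bar>f x\<bar>) \<partial>lebesgue) = (\<integral>x. c * \<bar>f x\<bar> \<partial>lebesgue)"
    using c by (intro nn_integral_eq_integral integrable_mult_right integrable_abs f) auto
  thus ?thesis unfolding nf_def by simp
qed

lemma maxst_count: "infsum (\<lambda>k. if maxst k (idx \<omega> k x) then 1 else 0 :: ennreal) UNIV = (if x \<in> Om then 1 else 0)"
proof (cases "x \<in> Om")
  case True
  then obtain k0 where k0: "maxst k0 (idx \<omega> k0 x)" using maxst_exists by blast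
  have "infsum (\<lambda>k. if maxst k (idx \<omega> k x) then 1 else 0 :: ennreal) UNIV = (if maxst k0 (idx \<omega> k0 x) then 1 else 0)"
    by (rule infsum_single_ennreal) (metis k0 maxst_unique)
  thus ?thesis using k0 True by simp
next
  case False
  hence "\<And>k. \<not> maxst k (idx \<omega> k x)" unfolding Om_def maxst_def by auto
  thus ?thesis using False by simp
qed

lemma Om_measure: "emeasure lebesgue Om \<le> ennreal (nf / lam)"
proof -
  let ?ms = "\<lambda>z. (if maxst (fst z) (snd z) then 1 else 0 :: ennreal)"
  have "emeasure lebesgue Om = (\<integral>\<^sup>+x. indicator Om x \<partial>lebesgue)"
    using Om_sets by simp
  also have "\<dots> = (\<integral>\<^sup>+x. infsum (\<lambda>z. ?ms z * indicator (dcube \<omega> (fst z) (snd z)) x) UNIV \<partial>lebesgue)"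
  proof (intro nn_integral_cong)
    fix x
    show "indicator Om x = infsum (\<lambda>z. ?ms z * indicator (dcube \<omega> (fst z) (snd z)) x) UNIV"
      using CL[where h="\<lambda>k m. if maxst k m then 1 else 0" and x=x and \<omega>=\<omega>] maxst_count[of x]
      by (simp add: indicator_def)
  qed
  also have "\<dots> = infsum (\<lambda>z. \<integral>\<^sup>+x. ?ms z * indicator (dcube \<omega> (fst z) (snd z)) x \<partial>lebesgue) UNIV"
    by (rule nn_integral_infsum) simp
  also have "\<dots> \<le> infsum (\<lambda>z. \<integral>\<^sup>+x. ennreal (1/lam * \<bar>f x\<bar>) * ?ms z * indicator (dcube \<omega> (fst z) (snd z)) x \<partial>lebesgue) UNIV"
  proof (rule infsum_mono)
    fix z :: "int \<times> ('n \<Rightarrow> int)"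
    obtain k m where z: "z = (k, m)" by fastforce
    show "(\<integral>\<^sup>+x. ?ms z * indicator (dcube \<omega> (fst z) (snd z)) x \<partial>lebesgue)
        \<le> (\<integral>\<^sup>+x. ennreal (1/lam * \<bar>f x\<bar>) * ?ms z * indicator (dcube \<omega> (fst z) (snd z)) x \<partial>lebesgue)"
    proof (cases "maxst k m")
      case False thus ?thesis using z by simp
    next
      case True
      hence st: "lam * cube_vol TYPE('n) k < A k m" unfolding maxst_def stopped_def by auto
      have "(\<integral>\<^sup>+x. ?ms z * indicator (dcube \<omega> (fst z) (snd z)) x \<partial>lebesgue) = emeasure lebesgue (dcube \<omega> k m)"
        using True z by simp
      also have "\<dots> \<le> ennreal (cube_vol TYPE('n) k)" by (rule emeasure_dcube)
      also have "\<dots> \<le> ennreal (1/lam * A k m)"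
        using st lam by (intro ennreal_leI) (simp add: field_simps)
      also have "\<dots> = (\<integral>\<^sup>+x. ennreal (1/lam * \<bar>f x\<bar>) * indicator (dcube \<omega> k m) x \<partial>lebesgue)"
        using lam by (intro A_ennreal_c) simp
      also have "\<dots> = (\<integral>\<^sup>+x. ennreal (1/lam * \<bar>f x\<bar>) * ?ms z * indicator (dcube \<omega> (fst z) (snd z)) x \<partial>lebesgue)"
        using True z by simp
      finally show ?thesis .
    qed
  qed (auto intro: nonneg_summable_on_complete)
  also have "\<dots> = (\<integral>\<^sup>+x. infsum (\<lambda>z. ennreal (1/lam * \<bar>f x\<bar>) * ?ms z * indicator (dcube \<omega> (fst z) (snd z)) x) UNIV \<partial>lebesgue)"
    by (rule nn_integral_infsum[symmetric]) measurable
  also have "\<dots> = (\<integral>\<^sup>+x. ennreal (1/lam * \<bar>f x\<bar>) * indicator Om x \<partial>lebesgue)"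
  proof (intro nn_integral_cong)
    fix x
    have "infsum (\<lambda>z. ennreal (1/lam * \<bar>f x\<bar>) * ?ms z * indicator (dcube \<omega> (fst z) (snd z)) x) UNIV
      = infsum (\<lambda>k. ennreal (1/lam * \<bar>f x\<bar>) * (if maxst k (idx \<omega> k x) then 1 else 0)) UNIV"
      using CL[where h="\<lambda>k m. ennreal (1/lam * \<bar>f x\<bar>) * (if maxst k m then 1 else 0)" and x=x] by simp
    also have "\<dots> = ennreal (1/lam * \<bar>f x\<bar>) * indicator Om x"
      unfolding infsum_cmult_ennreal maxst_count by (simp add: indicator_def)
    finally show "infsum (\<lambda>z. ennreal (1/lam * \<bar>f x\<bar>) * ?ms z * indicator (dcube \<omega> (fst z) (snd z)) x) UNIV
       = ennreal (1/lam * \<bar>f x\<bar>) * indicator Om x" .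
  qed
  also have "\<dots> \<le> (\<integral>\<^sup>+x. ennreal (1/lam * \<bar>f x\<bar>) \<partial>lebesgue)"
    by (intro nn_integral_mono) (simp add: indicator_def)
  also have "\<dots> = ennreal (1/lam * nf)"
    using lam by (intro nf_ennreal_c[symmetric]) simp
  finally show ?thesis by simp
qed

end


context sq
begin

definition Hs where "Hs x = infsum (\<lambda>P. ennreal (haar_coeff_sq \<omega> f (fst P) (snd P) / cube_vol TYPE('n) (fst P))
      * indicator (dcube \<omega> (fst P) (snd P)) x) UNIV"

definition gq where "gq k m = (if goodm k m then ennreal (haar_coeff_sq \<omega> f k m) else 0)"

lemma vol_ne0[simp]: "cube_vol TYPE('n) k \<noteq> 0"
  using vol_pos[where 'n='n, of k] by linarith

lemma Om_compl[measurable]: "- Om \<in> sets lebesgue"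
  using sets.compl_sets[OF Om_sets] by (simp add: Compl_eq_Diff_UNIV)

lemma Om_sets'[measurable]: "Om \<in> sets lebesgue" by (rule Om_sets)

lemma Hs_meas[measurable]: "Hs \<in> borel_measurable lebesgue"
  unfolding Hs_def by measurable

lemma F2: "(\<integral>\<^sup>+x. Hs x * indicator (- Om) x \<partial>lebesgue) \<le> infsum (\<lambda>z. gq (fst z) (snd z)) UNIV"
proof -
  let ?F = "\<lambda>P x. ennreal (haar_coeff_sq \<omega> f (fst P) (snd P) / cube_vol TYPE('n) (fst P))
      * indicator (dcube \<omega> (fst P) (snd P)) x * indicator (- Om) x"
  have "(\<integral>\<^sup>+x. Hs x * indicator (- Om) x \<partial>lebesgue) = (\<integral>\<^sup>+x. infsum (\<lambda>P. ?F P x) UNIV \<partial>lebesgue)"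
    unfolding Hs_def by (intro nn_integral_cong) (simp add: indicator_def)
  also have "\<dots> = infsum (\<lambda>P. \<integral>\<^sup>+x. ?F P x \<partial>lebesgue) UNIV"
    by (intro nn_integral_infsum) measurable
  also have "\<dots> \<le> infsum (\<lambda>z. gq (fst z) (snd z)) UNIV"
  proof (rule infsum_mono)
    fix z :: "int \<times> ('n \<Rightarrow> int)"
    obtain k m where z: "z = (k, m)" by fastforce
    show "(\<integral>\<^sup>+x. ?F z x \<partial>lebesgue) \<le> gq (fst z) (snd z)"
    proof (cases "goodm k m")
      case False
      have F0: "?F z x = 0" for x
      proof (cases "x \<in> dcube \<omega> k m \<and> x \<notin> Om")
        case True
        hence "goodm k m" using notOm_good[of x k] by (simp add: mem_dcube)
        thus ?thesis using False by simp
      next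
        case False thus ?thesis using z by (auto simp: indicator_def)
      qed
      have "(\<integral>\<^sup>+x. ?F z x \<partial>lebesgue) = 0" by (simp only: F0 nn_integral_const) simp
      thus ?thesis by simp
    next
      case True
      have "(\<integral>\<^sup>+x. ?F z x \<partial>lebesgue) \<le> (\<integral>\<^sup>+x. ennreal (haar_coeff_sq \<omega> f k m / cube_vol TYPE('n) k) * indicator (dcube \<omega> k m) x \<partial>lebesgue)"
        using z by (intro nn_integral_mono) (simp add: indicator_def)
      also have "\<dots> = ennreal (haar_coeff_sq \<omega> f k m / cube_vol TYPE('n) k) * emeasure lebesgue (dcube \<omega> k m)"
        by (simp add: nn_integral_cmult_indicator)
      also have "\<dots> \<le> ennreal (haar_coeff_sq \<omega> f k m / cube_vol TYPE('n) k) * ennreal (cube_vol TYPE('n) k)"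
        by (intro mult_left_mono emeasure_dcube) simp
      also have "\<dots> = ennreal (haar_coeff_sq \<omega> f k m)"
        using vol_pos[of k] coeff_nonneg[of k m] by (simp add: ennreal_mult[symmetric])
      finally show ?thesis using True z by (simp add: gq_def)
    qed
  qed (auto intro: nonneg_summable_on_complete)
  finally show ?thesis .
qed

definition te where "te k m = (if goodm k m then ennreal (E \<omega> f k m) else 0)"
definition se where "se k m = (if maxst k m then ennreal (E \<omega> f k m) else 0)"
definition TG where "TG k = infsum (gq k) UNIV"
definition TT where "TT k = infsum (te k) UNIV"
definition TS where "TS k = infsum (se k) UNIV"

lemma infsum_add_ennreal:
  fixes g h :: "'a \<Rightarrow> ennreal"
  shows "infsum (\<lambda>m. g m + h m) S = infsum g S + infsum h S"
  by (rule infsum_add; rule nonneg_summable_on_complete; simp)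

lemma step: "TG k + TT k = TT (k+1) + TS (k+1)"
proof -
  let ?\<psi> = "\<lambda>\<delta> m. if goodm k m then ennreal (E \<omega> f (k+1) (ch \<omega> k m \<delta>)) else 0"
  have "TG k + TT k = infsum (\<lambda>m. gq k m + te k m) UNIV"
    unfolding TG_def TT_def by (rule infsum_add_ennreal[symmetric])
  also have "\<dots> = infsum (\<lambda>m. \<Sum>\<delta>\<in>UNIV. ?\<psi> \<delta> m) UNIV"
  proof (rule infsum_cong)
    fix m
    show "gq k m + te k m = (\<Sum>\<delta>\<in>UNIV. ?\<psi> \<delta> m)"
    proof (cases "goodm k m")
      case True
      have "gq k m + te k m = ennreal (haar_coeff_sq \<omega> f k m + E \<omega> f k m)"
        using True coeff_nonneg E_nonneg by (simp add: gq_def te_def)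
      also have "\<dots> = ennreal (\<Sum>\<delta>\<in>UNIV. E \<omega> f (k+1) (ch \<omega> k m \<delta>))"
        by (simp only: coeff_id[OF f])
      also have "\<dots> = (\<Sum>\<delta>\<in>UNIV. ennreal (E \<omega> f (k+1) (ch \<omega> k m \<delta>)))"
        by (rule sum_ennreal[symmetric]) (rule E_nonneg)
      finally show ?thesis using True by simp
    next
      case False thus ?thesis by (simp add: gq_def te_def)
    qed
  qed
  also have "\<dots> = (\<Sum>\<delta>\<in>UNIV. infsum (?\<psi> \<delta>) UNIV)"
    by (rule infsum_sum_ennreal) simp
  also have "\<dots> = infsum (\<lambda>m'. if goodm k (pd \<omega> k m') then ennreal (E \<omega> f (k+1) m') else 0) UNIV"
    using RI[where \<omega>=\<omega> and k=k and \<phi>="\<lambda>m'. if goodm k (pd \<omega> k m') then ennreal (E \<omega> f (k+1) m') else 0"]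
    by (simp add: pd_ch)
  also have "\<dots> = infsum (\<lambda>m'. te (k+1) m' + se (k+1) m') UNIV"
    by (rule infsum_cong) (simp add: te_def se_def goodm_succ maxst_succ)
  also have "\<dots> = TT (k+1) + TS (k+1)"
    unfolding TT_def TS_def by (rule infsum_add_ennreal)
  finally show ?thesis .
qed

lemma iter: "(\<Sum>i<n. TG (M + int i)) + TT M = TT (M + int n) + (\<Sum>i<n. TS (M + int i + 1))"
proof (induction n)
  case 0 thus ?case by simp
next
  case (Suc n)
  have "(\<Sum>i<Suc n. TG (M + int i)) + TT M = ((\<Sum>i<n. TG (M + int i)) + TT M) + TG (M + int n)"
    by (simp add: ac_simps)
  also have "\<dots> = (TG (M + int n) + TT (M + int n)) + (\<Sum>i<n. TS (M + int i + 1))"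
    unfolding Suc.IH by (simp add: ac_simps)
  also have "\<dots> = TT (M + int n + 1) + TS (M + int n + 1) + (\<Sum>i<n. TS (M + int i + 1))"
    unfolding step ..
  also have "\<dots> = TT (M + int (Suc n)) + (\<Sum>i<Suc n. TS (M + int i + 1))"
    by (simp add: ac_simps)
  finally show ?case .
qed

definition c0 where "c0 = 2 ^ CARD('n) * lam"

lemma c0_pos: "c0 > 0" unfolding c0_def using lam by simp

lemma te_le: "te k m \<le> (if goodm k m then ennreal (c0 * A k m) else 0)"
proof (cases "goodm k m")
  case True
  hence ns: "A k m \<le> lam * cube_vol TYPE('n) k" using goodm_self unfolding stopped_def by force
  have "E \<omega> f k m \<le> (A k m)\<^sup>2 / cube_vol TYPE('n) k" by (rule E_le)
  also have "\<dots> \<le> A k m * lam"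
  proof -
    have "(A k m)\<^sup>2 \<le> A k m * (lam * cube_vol TYPE('n) k)"
      unfolding power2_eq_square by (intro mult_left_mono ns A_nonneg)
    thus ?thesis using vol_pos[where 'n='n, of k] by (simp add: pos_divide_le_eq mult_ac)
  qed
  also have "\<dots> \<le> c0 * A k m"
  proof -
    have "(1::real) \<le> 2 ^ CARD('n)" by simp
    hence "lam \<le> 2 ^ CARD('n) * lam" using lam by simp
    from mult_left_mono[OF this A_nonneg[of k m]] show ?thesis unfolding c0_def by (simp add: mult_ac)
  qed
  finally show ?thesis using True by (simp add: te_def ennreal_leI)
qed (simp add: te_def)

lemma se_le: "se k m \<le> (if maxst k m then ennreal (c0 * A k m) else 0)"
proof (cases "maxst k m")
  case True
  let ?p = "pd \<omega> (k-1) m"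
  have "maxst (k - 1 + 1) m" using True by simp
  hence "goodm (k-1) ?p" using maxst_succ by blast
  hence ns: "A (k-1) ?p \<le> lam * cube_vol TYPE('n) (k-1)" using goodm_self unfolding stopped_def by force
  have vs: "cube_vol TYPE('n) (k-1) = 2 ^ CARD('n) * cube_vol TYPE('n) k"
    using vol_succ[where 'n='n, of "k-1"] by simp
  have sub: "A k m \<le> A (k-1) ?p"
    using dcube_pd_sub[of \<omega> "k-1" m] by (intro A_sub) simp
  have "E \<omega> f k m \<le> (A k m)\<^sup>2 / cube_vol TYPE('n) k" by (rule E_le)
  also have "\<dots> \<le> A k m * c0"
  proof -
    have "(A k m)\<^sup>2 \<le> A k m * (lam * cube_vol TYPE('n) (k-1))"
      unfolding power2_eq_square using sub ns by (intro mult_left_mono A_nonneg) simp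
    also have "\<dots> = A k m * c0 * cube_vol TYPE('n) k" unfolding vs c0_def by (simp add: mult_ac)
    finally show ?thesis using vol_pos[where 'n='n, of k] by (simp add: pos_divide_le_eq)
  qed
  finally show ?thesis using True by (simp add: se_def ennreal_leI mult.commute)
qed (simp add: se_def)

lemma sumA:
  "infsum (\<lambda>m. if P m then ennreal (c0 * A k m) else 0) UNIV
    = (\<integral>\<^sup>+x. ennreal (c0 * \<bar>f x\<bar>) * (if P (idx \<omega> k x) then 1 else 0) \<partial>lebesgue)"
proof -
  have "infsum (\<lambda>m. if P m then ennreal (c0 * A k m) else 0) UNIV
     = infsum (\<lambda>m. \<integral>\<^sup>+x. ennreal (c0 * \<bar>f x\<bar>) * (if P m then 1 else 0) * indicator (dcube \<omega> k m) x \<partial>lebesgue) UNIV"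
  proof (rule infsum_cong)
    fix m
    show "(if P m then ennreal (c0 * A k m) else 0) =
       (\<integral>\<^sup>+x. ennreal (c0 * \<bar>f x\<bar>) * (if P m then 1 else 0) * indicator (dcube \<omega> k m) x \<partial>lebesgue)"
      using A_ennreal_c[of c0 k m] c0_pos by simp
  qed
  also have "\<dots> = (\<integral>\<^sup>+x. infsum (\<lambda>m. ennreal (c0 * \<bar>f x\<bar>) * (if P m then 1 else 0) * indicator (dcube \<omega> k m) x) UNIV \<partial>lebesgue)"
    by (rule nn_integral_infsum[symmetric]) measurable
  also have "\<dots> = (\<integral>\<^sup>+x. ennreal (c0 * \<bar>f x\<bar>) * (if P (idx \<omega> k x) then 1 else 0) \<partial>lebesgue)"
    by (intro nn_integral_cong) (rule CLm[where h="\<lambda>m. ennreal (c0 * \<bar>f _\<bar>) * (if P m then 1 else 0)"])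
  finally show ?thesis .
qed

end


lemma sum_single:
  fixes g :: "'a \<Rightarrow> 'b::comm_monoid_add"
  assumes "finite I" "i0 \<in> I" "\<And>i. i \<in> I \<Longrightarrow> i \<noteq> i0 \<Longrightarrow> g i = 0"
  shows "sum g I = g i0"
proof -
  have "sum g I = g i0 + sum g (I - {i0})" by (rule sum.remove[OF assms(1,2)])
  also have "sum g (I - {i0}) = 0" by (rule sum.neutral) (use assms(3) in auto)
  finally show ?thesis by simp
qed

context sq
begin

lemma count_le1:
  "(if goodm (M + int n) (idx \<omega> (M + int n) x) then 1 else 0)
     + (\<Sum>i<n. if maxst (M + int i + 1) (idx \<omega> (M + int i + 1) x) then 1 else 0) \<le> (1::ennreal)"
proof (cases "goodm (M + int n) (idx \<omega> (M + int n) x)")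
  case True
  have "\<not> maxst (M + int i + 1) (idx \<omega> (M + int i + 1) x)" if "i < n" for i
    using good_no_maxst[OF True, of "M + int i + 1"] that by simp
  thus ?thesis using True by simp
next
  case False
  show ?thesis
  proof (cases "\<exists>i<n. maxst (M + int i + 1) (idx \<omega> (M + int i + 1) x)")
    case True
    then obtain i0 where i0: "i0 < n" "maxst (M + int i0 + 1) (idx \<omega> (M + int i0 + 1) x)" by blast
    have "(\<Sum>i<n. if maxst (M + int i + 1) (idx \<omega> (M + int i + 1) x) then 1 else 0 :: ennreal)
       = (if maxst (M + int i0 + 1) (idx \<omega> (M + int i0 + 1) x) then 1 else 0)"
    proof (rule sum_single)
      fix i assume "i \<in> {..<n}" "i \<noteq> i0"
      thus "(if maxst (M + int i + 1) (idx \<omega> (M + int i + 1) x) then 1 else 0 :: ennreal) = 0"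
        using maxst_unique[OF i0(2), of "M + int i + 1"] by fastforce
    qed (use i0 in auto)
    thus ?thesis using False i0 by simp
  next
    case False
    thus ?thesis using \<open>\<not> goodm _ _\<close> by simp
  qed
qed

lemma meas_idx[measurable]: "(\<lambda>x. if P (idx \<omega> k x) then 1 else 0 :: ennreal) \<in> borel_measurable lebesgue"
proof -
  have "(\<lambda>x. if P (idx \<omega> k x) then 1 else 0 :: ennreal) = (\<lambda>x. infsum (\<lambda>m. (if P m then 1 else 0) * indicator (dcube \<omega> k m) x) UNIV)"
    by (rule ext) (rule CLm[where h="\<lambda>m. if P m then 1 else 0", symmetric])
  also have "\<dots> \<in> borel_measurable lebesgue" by measurable
  finally show ?thesis .
qed

lemma bound: "TT (M + int n) + (\<Sum>i<n. TS (M + int i + 1)) \<le> ennreal (c0 * nf)"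
proof -
  let ?g = "\<lambda>x. ennreal (c0 * \<bar>f x\<bar>)"
  have tt: "TT k \<le> (\<integral>\<^sup>+x. ?g x * (if goodm k (idx \<omega> k x) then 1 else 0) \<partial>lebesgue)" for k
  proof -
    have "TT k \<le> infsum (\<lambda>m. if goodm k m then ennreal (c0 * A k m) else 0) UNIV"
      unfolding TT_def by (rule infsum_mono[OF nonneg_summable_on_complete nonneg_summable_on_complete te_le]) simp_all
    thus ?thesis unfolding sumA .
  qed
  have ts: "TS k \<le> (\<integral>\<^sup>+x. ?g x * (if maxst k (idx \<omega> k x) then 1 else 0) \<partial>lebesgue)" for k
  proof -
    have "TS k \<le> infsum (\<lambda>m. if maxst k m then ennreal (c0 * A k m) else 0) UNIV"
      unfolding TS_def by (rule infsum_mono[OF nonneg_summable_on_complete nonneg_summable_on_complete se_le]) simp_all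
    thus ?thesis unfolding sumA .
  qed
  have "TT (M + int n) + (\<Sum>i<n. TS (M + int i + 1))
     \<le> (\<integral>\<^sup>+x. ?g x * (if goodm (M + int n) (idx \<omega> (M + int n) x) then 1 else 0) \<partial>lebesgue)
       + (\<Sum>i<n. \<integral>\<^sup>+x. ?g x * (if maxst (M + int i + 1) (idx \<omega> (M + int i + 1) x) then 1 else 0) \<partial>lebesgue)"
    by (intro add_mono sum_mono tt ts)
  also have "\<dots> = (\<integral>\<^sup>+x. ?g x * (if goodm (M + int n) (idx \<omega> (M + int n) x) then 1 else 0)
       + (\<Sum>i<n. ?g x * (if maxst (M + int i + 1) (idx \<omega> (M + int i + 1) x) then 1 else 0)) \<partial>lebesgue)"
    by (subst nn_integral_sum[symmetric], measurable, subst nn_integral_add[symmetric]) measurable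
  also have "\<dots> \<le> (\<integral>\<^sup>+x. ?g x \<partial>lebesgue)"
  proof (rule nn_integral_mono)
    fix x
    have "?g x * (if goodm (M + int n) (idx \<omega> (M + int n) x) then 1 else 0)
       + (\<Sum>i<n. ?g x * (if maxst (M + int i + 1) (idx \<omega> (M + int i + 1) x) then 1 else 0))
      = ?g x * ((if goodm (M + int n) (idx \<omega> (M + int n) x) then 1 else 0)
       + (\<Sum>i<n. (if maxst (M + int i + 1) (idx \<omega> (M + int i + 1) x) then 1 else 0)))"
      by (simp add: distrib_left sum_distrib_left)
    also have "\<dots> \<le> ?g x * 1" by (intro mult_left_mono count_le1) simp
    finally show "?g x * (if goodm (M + int n) (idx \<omega> (M + int n) x) then 1 else 0)
       + (\<Sum>i<n. ?g x * (if maxst (M + int i + 1) (idx \<omega> (M + int i + 1) x) then 1 else 0)) \<le> ?g x"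
      by simp
  qed
  also have "\<dots> = ennreal (c0 * nf)" using c0_pos by (intro nf_ennreal_c[symmetric]) simp
  finally show ?thesis .
qed

lemma TG_partial: "(\<Sum>i<n. TG (M + int i)) \<le> ennreal (c0 * nf)"
proof -
  have "(\<Sum>i<n. TG (M + int i)) \<le> (\<Sum>i<n. TG (M + int i)) + TT M" by simp
  also have "\<dots> = TT (M + int n) + (\<Sum>i<n. TS (M + int i + 1))" by (rule iter)
  also have "\<dots> \<le> ennreal (c0 * nf)" by (rule bound)
  finally show ?thesis .
qed

lemma TG_total: "infsum (\<lambda>z. gq (fst z) (snd z)) UNIV \<le> ennreal (c0 * nf)"
proof (rule infsum_le_ennreal)
  fix F :: "(int \<times> ('n \<Rightarrow> int)) set" assume fin: "finite F"
  let ?K = "fst ` F" and ?S = "snd ` F"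
  have "sum (\<lambda>z. gq (fst z) (snd z)) F \<le> sum (\<lambda>z. gq (fst z) (snd z)) (?K \<times> ?S)"
    using fin by (intro sum_mono2) force+
  also have "\<dots> = (\<Sum>k\<in>?K. \<Sum>m\<in>?S. gq k m)"
    by (subst sum.cartesian_product) (simp add: case_prod_beta)
  also have "\<dots> \<le> (\<Sum>k\<in>?K. TG k)"
    unfolding TG_def by (intro sum_mono sum_le_infsum_ennreal) (use fin in auto)
  also have "\<dots> \<le> ennreal (c0 * nf)"
  proof (cases "?K = {}")
    case True thus ?thesis by simp
  next
    case False
    define M where "M = Min ?K"
    define n where "n = nat (Max ?K - M) + 1"
    have sub: "?K \<subseteq> (\<lambda>i. M + int i) ` {..<n}"
    proof
      fix k assume k: "k \<in> ?K"
      have "M \<le> k" "k \<le> Max ?K" unfolding M_def using fin k by auto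
      hence "k = M + int (nat (k - M))" "nat (k - M) < n" unfolding n_def by auto
      thus "k \<in> (\<lambda>i. M + int i) ` {..<n}" by blast
    qed
    have "(\<Sum>k\<in>?K. TG k) \<le> (\<Sum>k\<in>(\<lambda>i. M + int i) ` {..<n}. TG k)"
      by (intro sum_mono2 sub) auto
    also have "\<dots> = (\<Sum>i<n. TG (M + int i))"
      by (subst sum.reindex) (auto intro: inj_onI)
    also have "\<dots> \<le> ennreal (c0 * nf)" by (rule TG_partial)
    finally show ?thesis .
  qed
  finally show "sum (\<lambda>z. gq (fst z) (snd z)) F \<le> ennreal (c0 * nf)" .
qed

end


lemma esqrt_meas[measurable]: "esqrt \<in> borel_measurable borel"
  unfolding esqrt_def by measurable

definition Sset :: "(int \<Rightarrow> 'n::finite \<Rightarrow> bool) \<Rightarrow> nat \<Rightarrow> ((int \<times> ('n \<Rightarrow> int)) \<times> (int \<times> ('n \<Rightarrow> int))) set" where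
  "Sset \<omega> j = {((k, m), (k', m')). dcube \<omega> k' m' \<subseteq> dcube \<omega> k m \<and>
                            sidelen k' = 2 powr (- real j) * sidelen k}"

definition FF :: "(int \<Rightarrow> 'n::finite \<Rightarrow> bool) \<Rightarrow> (real^'n \<Rightarrow> real) \<Rightarrow> int \<times> ('n \<Rightarrow> int) \<Rightarrow> real^'n \<Rightarrow> ennreal" where
  "FF \<omega> f P x = ennreal (haar_coeff_sq \<omega> f (fst P) (snd P) / cube_vol TYPE('n) (fst P))
         * indicator (dcube \<omega> (fst P) (snd P)) x"

lemma Sj_eq: "Sj \<omega> j f x = esqrt (infsum (\<lambda>z. FF \<omega> f (snd z) x) (Sset \<omega> j))"
  unfolding Sj_def Sset_def FF_def by (rule arg_cong[where f=esqrt], rule infsum_cong) (simp add: case_prod_beta)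

lemma inj_snd: "inj_on snd (Sset \<omega> j)"
proof (rule inj_onI)
  fix z1 z2 assume z: "z1 \<in> Sset \<omega> j" "z2 \<in> Sset \<omega> j" "snd z1 = snd z2"
  obtain k1 m1 k' m' where z1: "z1 = ((k1, m1), (k', m'))" by (metis prod.collapse)
  obtain k2 m2 where z2: "z2 = ((k2, m2), (k', m'))" using z(3) z1 by (metis prod.collapse snd_conv)
  have s: "sidelen k1 = sidelen k2" using z z1 z2 unfolding Sset_def by auto
  hence k: "k1 = k2" by (rule sidelen_inj)
  have "pt \<omega> k' m' \<in> dcube \<omega> k1 m1" "pt \<omega> k' m' \<in> dcube \<omega> k2 m2"
    using z z1 z2 pt_in[of \<omega> k' m'] unfolding Sset_def by auto
  hence "m1 = m2" using k by (simp add: mem_dcube)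
  thus "z1 = z2" using z1 z2 k by simp
qed

lemma G_le_H: "infsum (\<lambda>z. FF \<omega> f (snd z) x) (Sset \<omega> j) \<le> infsum (\<lambda>P. FF \<omega> f P x) UNIV"
proof -
  have "infsum (\<lambda>z. FF \<omega> f (snd z) x) (Sset \<omega> j) = infsum (\<lambda>P. FF \<omega> f P x) (snd ` Sset \<omega> j)"
    using infsum_reindex[OF inj_snd, of "\<lambda>P. FF \<omega> f P x" \<omega> j] by (simp add: o_def)
  also have "\<dots> \<le> infsum (\<lambda>P. FF \<omega> f P x) UNIV"
    by (rule infsum_mono_neutral) (auto intro: nonneg_summable_on_complete)
  finally show ?thesis .
qed

lemma Sj_meas:
  assumes f: "integrable lebesgue f"
  shows "Sj \<omega> j f \<in> borel_measurable lebesgue"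
proof -
  have fm[measurable]: "f \<in> borel_measurable lebesgue" using f by (rule borel_measurable_integrable)
  have eq: "Sj \<omega> j f = (\<lambda>x. esqrt (infsum (\<lambda>z. if z \<in> Sset \<omega> j then FF \<omega> f (snd z) x else 0) UNIV))"
  proof
    fix x
    have "infsum (\<lambda>z. FF \<omega> f (snd z) x) (Sset \<omega> j) = infsum (\<lambda>z. if z \<in> Sset \<omega> j then FF \<omega> f (snd z) x else 0) UNIV"
      by (rule infsum_cong_neutral) auto
    thus "Sj \<omega> j f x = esqrt (infsum (\<lambda>z. if z \<in> Sset \<omega> j then FF \<omega> f (snd z) x else 0) UNIV)"
      unfolding Sj_eq by simp
  qed
  have [measurable]: "(\<lambda>x. if z \<in> Sset \<omega> j then FF \<omega> f (snd z) x else 0) \<in> borel_measurable lebesgue" for z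
    by (cases "z \<in> Sset \<omega> j") (simp_all add: FF_def)
  show ?thesis unfolding eq by measurable
qed

lemma pw:
  fixes G H :: ennreal and lam :: real
  assumes lam: "lam > 0" and lt: "ennreal lam < esqrt G" and le: "G \<le> H"
  shows "1 \<le> ennreal (1 / lam\<^sup>2) * H"
proof (cases "G = top")
  case True
  hence "H = top" using le top.extremum_unique by blast
  moreover have "ennreal (1 / lam\<^sup>2) \<noteq> 0" using lam by simp
  ultimately show ?thesis by (simp add: ennreal_mult_top)
next
  case False
  define g where "g = enn2real G"
  have g0: "g \<ge> 0" unfolding g_def by simp
  have Gg: "G = ennreal g" unfolding g_def using False by (simp add: ennreal_enn2real_if)
  have "esqrt G = ennreal (sqrt g)" unfolding esqrt_def g_def using False by simp
  hence "lam < sqrt g" using lt lam by (simp add: ennreal_less_iff)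
  hence "lam\<^sup>2 < (sqrt g)\<^sup>2" using lam by (intro power_strict_mono) auto
  hence l2: "lam\<^sup>2 < g" using g0 by simp
  have "(1::ennreal) = ennreal (1 / lam\<^sup>2 * lam\<^sup>2)" using lam by simp
  also have "\<dots> \<le> ennreal (1 / lam\<^sup>2 * g)" using l2 lam by (intro ennreal_leI mult_left_mono) auto
  also have "\<dots> = ennreal (1 / lam\<^sup>2) * G" unfolding Gg using g0 lam by (intro ennreal_mult) auto
  also have "\<dots> \<le> ennreal (1 / lam\<^sup>2) * H" using le by (intro mult_left_mono) auto
  finally show ?thesis .
qed

context sq
begin

lemma Hs_FF: "Hs x = infsum (\<lambda>P. FF \<omega> f P x) UNIV"
  unfolding Hs_def FF_def ..

lemma level: "emeasure lebesgue {x. ennreal lam < Sj \<omega> j f x} \<le> ennreal ((1 + 2 ^ CARD('n)) * nf / lam)"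
proof -
  let ?c = "ennreal (1 / lam\<^sup>2)"
  define B where "B = {x \<in> - Om. 1 \<le> ?c * Hs x}"
  have B[measurable]: "B \<in> sets lebesgue" unfolding B_def by measurable
  have sub: "{x. ennreal lam < Sj \<omega> j f x} \<subseteq> Om \<union> B"
  proof
    fix x assume "x \<in> {x. ennreal lam < Sj \<omega> j f x}"
    hence "ennreal lam < esqrt (infsum (\<lambda>z. FF \<omega> f (snd z) x) (Sset \<omega> j))" unfolding Sj_eq by simp
    hence "1 \<le> ?c * Hs x" unfolding Hs_FF by (rule pw[OF lam _ G_le_H])
    thus "x \<in> Om \<union> B" unfolding B_def by auto
  qed
  have "emeasure lebesgue {x. ennreal lam < Sj \<omega> j f x} \<le> emeasure lebesgue (Om \<union> B)"
    by (rule emeasure_mono[OF sub]) measurable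
  also have "\<dots> \<le> emeasure lebesgue Om + emeasure lebesgue B"
    by (rule emeasure_subadditive) measurable
  also have "emeasure lebesgue B \<le> ?c * (\<integral>\<^sup>+x. Hs x * indicator (- Om) x \<partial>lebesgue)"
    unfolding B_def by (rule nn_integral_Markov_inequality) measurable
  also have "\<dots> \<le> ?c * ennreal (c0 * nf)"
    by (intro mult_left_mono order.trans[OF F2 TG_total]) simp
  also have "emeasure lebesgue Om + ?c * ennreal (c0 * nf) \<le> ennreal (nf / lam) + ?c * ennreal (c0 * nf)"
    by (intro add_mono Om_measure) simp
  also have "\<dots> = ennreal ((1 + 2 ^ CARD('n)) * nf / lam)"
  proof -
    have "ennreal (nf / lam) + ?c * ennreal (c0 * nf) = ennreal (nf / lam + 1 / lam\<^sup>2 * (c0 * nf))"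
    proof -
      have "?c * ennreal (c0 * nf) = ennreal (1 / lam\<^sup>2 * (c0 * nf))"
        using nf_nonneg c0_pos lam by (intro ennreal_mult[symmetric]) auto
      moreover have "ennreal (nf / lam) + ennreal (1 / lam\<^sup>2 * (c0 * nf)) = ennreal (nf / lam + 1 / lam\<^sup>2 * (c0 * nf))"
        using nf_nonneg c0_pos lam by (intro ennreal_plus[symmetric]) auto
      ultimately show ?thesis by simp
    qed
    also have "nf / lam + 1 / lam\<^sup>2 * (c0 * nf) = (1 + 2 ^ CARD('n)) * nf / lam"
      unfolding c0_def using lam by (simp add: field_simps power2_eq_square)
    finally show ?thesis .
  qed
  finally show ?thesis by simp
qed

end

theorem proposition8p3:
  fixes \<omega> :: "int \<Rightarrow> 'n::finite \<Rightarrow> bool"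
  shows "\<exists>C>0. \<forall>j::nat. \<forall>f :: real^'n \<Rightarrow> real. integrable lebesgue f \<longrightarrow>
           (\<forall>l>0. {x. ennreal l < Sj \<omega> j f x} \<in> sets lebesgue) \<and>
           (SUP l\<in>{0<..}. ennreal l * emeasure lebesgue {x. ennreal l < Sj \<omega> j f x})
             \<le> ennreal (C * (1 + real j) * (\<integral>x. \<bar>f x\<bar> \<partial>lebesgue))"
proof (intro exI[of _ "1 + 2 ^ CARD('n)"] conjI allI impI)
  have "(0::real) < 2 ^ CARD('n)" by simp
  thus "(0::real) < 1 + 2 ^ CARD('n)" by linarith
next
  fix j :: nat and f :: "real^'n \<Rightarrow> real" and l :: real
  assume f: "integrable lebesgue f" and l: "l > 0"
  have [measurable]: "Sj \<omega> j f \<in> borel_measurable lebesgue" by (rule Sj_meas[OF f])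
  have "{x \<in> space lebesgue. ennreal l < Sj \<omega> j f x} \<in> sets lebesgue" by measurable
  thus "{x. ennreal l < Sj \<omega> j f x} \<in> sets lebesgue" by simp
next
  fix j :: nat and f :: "real^'n \<Rightarrow> real"
  assume f: "integrable lebesgue f"
  let ?nf = "\<integral>x. \<bar>f x\<bar> \<partial>lebesgue"
  have nf0: "?nf \<ge> 0" by (intro integral_nonneg_AE) auto
  show "(SUP l\<in>{0<..}. ennreal l * emeasure lebesgue {x. ennreal l < Sj \<omega> j f x})
             \<le> ennreal ((1 + 2 ^ CARD('n)) * (1 + real j) * ?nf)"
  proof (rule SUP_least)
    fix l :: real assume "l \<in> {0<..}"
    hence l: "l > 0" by simp
    interpret sq \<omega> f l by unfold_locales (use f l in auto)
    have "ennreal l * emeasure lebesgue {x. ennreal l < Sj \<omega> j f x} \<le> ennreal l * ennreal ((1 + 2 ^ CARD('n)) * nf / l)"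
      by (intro mult_left_mono level) simp
    also have "\<dots> = ennreal ((1 + 2 ^ CARD('n)) * ?nf)"
      using l nf0 unfolding nf_def by (simp add: ennreal_mult[symmetric])
    also have "\<dots> \<le> ennreal ((1 + 2 ^ CARD('n)) * (1 + real j) * ?nf)"
    proof (intro ennreal_leI)
      have "(1 + 2 ^ CARD('n)) * ?nf * 1 \<le> (1 + 2 ^ CARD('n)) * ?nf * (1 + real j)"
        using nf0 by (intro mult_left_mono) auto
      thus "(1 + 2 ^ CARD('n)) * ?nf \<le> (1 + 2 ^ CARD('n)) * (1 + real j) * ?nf" by (simp add: mult_ac)
    qed
    finally show "ennreal l * emeasure lebesgue {x. ennreal l < Sj \<omega> j f x} \<le> ennreal ((1 + 2 ^ CARD('n)) * (1 + real j) * ?nf)" .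
  qed
qed


end
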